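(* Let $X=\{x\in\mathbb{R}^n: Cx\le d\}$ be a polyhedral set ($C\in\mathbb{R}^{p\times n}$, $d\in\mathbb{R}^p$), let $g:\mathbb{R}^m\to\mathbb{R}$ be $\sigma_g$-strongly convex with $L_g$-Lipschitz continuous gradient, let $A\in\mathbb{R}^{m\times n}$ be nonzero, and set $f(x)=g(Ax)$. Assume the optimal set $X^*$ of $\min_{x\in X}f(x)$ is nonempty. Then there is a unique $t^*\in\mathbb{R}^m$ with $Ax^*=t^*$ for all $x^*\in X^*$, so that $X^*=\{x: Ax=t^*,\ Cx\le d\}$; let $\theta>0$ be a Hoffman constant for this polyhedron, i.e. $$\|x-[x]_{X^*}\|\le\theta\left\|\begin{pmatrix}Ax-t^*\\ [Cx-d]_+\end{pmatrix}\right\|\qquad\forall x\in\mathbb{R}^n .$$ Then $\nabla f$ is Lipschitz continuous with constant $L_f=L_g\|A\|^2$, and $f$ is quasi-strongly convex on $X$ with constant $\kappa_f=\sigma_g/\theta^2$, i.e. $$f^*\ge f(x)+\langle\nabla f(x),\bar x-x\rangle+\frac{\sigma_g}{2\theta^2}\|x-\bar x\|^2\qquad\forall x\in X,\ \bar x=[x]_{X^*}.$$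
   Context: $\|\cdot\|$ denotes the Euclidean norm (spectral norm for matrices), $[u]_S$ the Euclidean projection onto a closed convex set $S$, and $[v]_+$ the componentwise positive part. $g$ is $\sigma_g$-strongly convex means $g(z)\ge g(w)+\langle\nabla g(w),z-w\rangle+\frac{\sigma_g}{2}\|z-w\|^2$ for all $z,w$, with $\sigma_g>0$. $f^*=\min_{x\in X}f(x)$. *)

theory Defs
  imports "HOL-Analysis.Analysis"
begin

definition polyhedron :: "real^'n^'p \<Rightarrow> real^'p \<Rightarrow> (real^'n) set" where
  "polyhedron C d = {x. \<forall>i. (C *v x) $ i \<le> d $ i}"

definition argmin_set :: "('a \<Rightarrow> real) \<Rightarrow> 'a set \<Rightarrow> 'a set" where
  "argmin_set f X = {x \<in> X. \<forall>y\<in>X. f x \<le> f y}"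

definition pos_part_vec :: "real^'p \<Rightarrow> real^'p" where
  "pos_part_vec v = (\<chi> i. max 0 (v $ i))"

definition stack_norm :: "real^'m \<Rightarrow> real^'p \<Rightarrow> real" where
  "stack_norm u v = sqrt ((norm u)\<^sup>2 + (norm v)\<^sup>2)"

end

theory Submission
  imports Defs
begin

lemma vmul_bound:
  fixes A :: "real^'n^'m" and v :: "real^'m"
  shows "norm (v v* A) \<le> onorm (\<lambda>h. A *v h) * norm v"
proof -
  let ?w = "v v* A"
  let ?K = "onorm (\<lambda>h. A *v h)"
  have K0: "?K \<ge> 0" by (rule onorm_pos_le) simp
  have "(norm ?w)\<^sup>2 = ?w \<bullet> ?w" by (simp add: power2_norm_eq_inner)
  also have "\<dots> = v \<bullet> (A *v ?w)" by (rule dot_lmul_matrix)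
  also have "\<dots> \<le> norm v * norm (A *v ?w)" by (rule Cauchy_Schwarz_ineq2[THEN order_trans[OF abs_ge_self]])
  also have "\<dots> \<le> norm v * (?K * norm ?w)"
    by (rule mult_left_mono[OF onorm]) auto
  finally have h: "(norm ?w)\<^sup>2 \<le> (?K * norm v) * norm ?w" by (simp add: algebra_simps)
  show ?thesis
  proof (cases "norm ?w = 0")
    case True then show ?thesis using K0 by simp
  next
    case False
    then have "norm ?w > 0" by simp
    with h show ?thesis by (simp add: power2_eq_square)
  qed
qed

theorem theorem8:
  fixes C :: "real^'n^'p" and d :: "real^'p"
    and A :: "real^'n^'m" and g :: "real^'m \<Rightarrow> real" and G :: "real^'m \<Rightarrow> real^'m"
    and \<sigma>g Lg :: real
  assumes grad_g: "\<And>z. (g has_derivative (\<lambda>h. G z \<bullet> h)) (at z)"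
    and sigma_pos: "\<sigma>g > 0"
    and strong: "\<And>z w. g z \<ge> g w + G w \<bullet> (z - w) + \<sigma>g / 2 * (norm (z - w))\<^sup>2"
    and lip: "\<And>z w. norm (G z - G w) \<le> Lg * norm (z - w)"
    and A_nz: "A \<noteq> 0"
    and nonempty: "argmin_set (\<lambda>x. g (A *v x)) (polyhedron C d) \<noteq> {}"
  shows "(\<exists>!t. \<forall>xs\<in>argmin_set (\<lambda>x. g (A *v x)) (polyhedron C d). A *v xs = t)
    \<and> (\<forall>t. (\<forall>xs\<in>argmin_set (\<lambda>x. g (A *v x)) (polyhedron C d). A *v xs = t) \<longrightarrow>
           argmin_set (\<lambda>x. g (A *v x)) (polyhedron C d) = {x. A *v x = t \<and> (\<forall>i. (C *v x) $ i \<le> d $ i)})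
    \<and> (\<exists>Gf. (\<forall>x. ((\<lambda>x. g (A *v x)) has_derivative (\<lambda>h. Gf x \<bullet> h)) (at x))
           \<and> (\<forall>x y. norm (Gf x - Gf y) \<le> Lg * (onorm (\<lambda>v. A *v v))\<^sup>2 * norm (x - y))
           \<and> (\<forall>t \<theta>. (\<forall>xs\<in>argmin_set (\<lambda>x. g (A *v x)) (polyhedron C d). A *v xs = t) \<longrightarrow> \<theta> > 0 \<longrightarrow>
                (\<forall>x. norm (x - closest_point (argmin_set (\<lambda>x. g (A *v x)) (polyhedron C d)) x)
                      \<le> \<theta> * stack_norm (A *v x - t) (pos_part_vec (C *v x - d))) \<longrightarrow>
                (\<forall>x\<in>polyhedron C d.
                   let xb = closest_point (argmin_set (\<lambda>x. g (A *v x)) (polyhedron C d)) x in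
                   Inf ((\<lambda>x. g (A *v x)) ` polyhedron C d)
                     \<ge> g (A *v x) + Gf x \<bullet> (xb - x) + \<sigma>g / (2 * \<theta>\<^sup>2) * (norm (x - xb))\<^sup>2)))"
proof -
  define f where "f = (\<lambda>x. g (A *v x))"
  define X where "X = polyhedron C d"
  define S where "S = argmin_set f X"
  have Sne: "S \<noteq> {}" using nonempty by (simp add: S_def f_def X_def)
  then obtain x0 where x0: "x0 \<in> S" by blast
  have memS: "x \<in> S \<longleftrightarrow> x \<in> X \<and> (\<forall>y\<in>X. f x \<le> f y)" for x
    by (simp add: S_def argmin_set_def)
  have Xconv: "(1/2) *\<^sub>R x + (1/2) *\<^sub>R y \<in> X" if "x \<in> X" "y \<in> X" for x y
  proof -
    have "(C *v ((1/2) *\<^sub>R x + (1/2) *\<^sub>R y)) $ i \<le> d $ i" for i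
    proof -
      have e: "(C *v ((1/2) *\<^sub>R x + (1/2) *\<^sub>R y)) $ i = (1/2) * (C *v x) $ i + (1/2) * (C *v y) $ i"
        by (simp add: matrix_vector_right_distrib matrix_vector_mult_scaleR)
      have "(C *v x) $ i \<le> d $ i" "(C *v y) $ i \<le> d $ i"
        using that unfolding X_def polyhedron_def by auto
      then show ?thesis unfolding e by linarith
    qed
    then show ?thesis unfolding X_def polyhedron_def by simp
  qed
  have mid: "g ((1/2) *\<^sub>R z + (1/2) *\<^sub>R w) \<le> (g z + g w) / 2 - \<sigma>g / 8 * (norm (z - w))\<^sup>2" for z w
  proof -
    let ?m = "(1/2) *\<^sub>R z + (1/2) *\<^sub>R w"
    have e1: "z - ?m = (1/2) *\<^sub>R (z - w)" by (simp add: vec_eq_iff field_simps)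
    have e2: "w - ?m = - ((1/2) *\<^sub>R (z - w))" by (simp add: vec_eq_iff field_simps)
    have a: "g z \<ge> g ?m + G ?m \<bullet> (z - ?m) + \<sigma>g / 2 * (norm (z - ?m))\<^sup>2" by (rule strong)
    have b: "g w \<ge> g ?m + G ?m \<bullet> (w - ?m) + \<sigma>g / 2 * (norm (w - ?m))\<^sup>2" by (rule strong)
    have n: "(norm ((1/2) *\<^sub>R (z - w)))\<^sup>2 = (norm (z - w))\<^sup>2 / 4"
      by (simp add: power2_eq_square)
    show ?thesis using a b unfolding e1 e2 norm_minus_cancel n inner_minus_right by (simp add: field_simps)
  qed
  have sameA: "A *v x = A *v y" if "x \<in> S" "y \<in> S" for x y
  proof (rule ccontr)
    assume ne: "A *v x \<noteq> A *v y"
    have xX: "x \<in> X" and yX: "y \<in> X" using that memS by auto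
    let ?m = "(1/2) *\<^sub>R x + (1/2) *\<^sub>R y"
    have mX: "?m \<in> X" using Xconv xX yX .
    have Am: "A *v ?m = (1/2) *\<^sub>R (A *v x) + (1/2) *\<^sub>R (A *v y)"
      by (simp add: matrix_vector_right_distrib matrix_vector_mult_scaleR)
    have fxy: "f x \<le> f ?m" "f y \<le> f ?m" using that mX memS by auto
    have "(norm (A *v x - A *v y))\<^sup>2 > 0" using ne by simp
    then have "\<sigma>g / 8 * (norm (A *v x - A *v y))\<^sup>2 > 0" using sigma_pos by simp
    then have "f ?m < (f x + f y) / 2" using mid[of "A *v x" "A *v y"]
      unfolding f_def Am by linarith
    with fxy show False by simp
  qed
  define t0 where "t0 = A *v x0"
  have allt0: "\<forall>xs\<in>S. A *v xs = t0" unfolding t0_def using sameA x0 by blast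
  have uniq: "t = t0" if "\<forall>xs\<in>S. A *v xs = t" for t using that x0 allt0 by metis
  have Seq: "S = {x. A *v x = t0 \<and> (\<forall>i. (C *v x) $ i \<le> d $ i)}"
  proof (intro set_eqI iffI)
    fix x assume "x \<in> S" then show "x \<in> {x. A *v x = t0 \<and> (\<forall>i. (C *v x) $ i \<le> d $ i)}"
      using allt0 memS unfolding X_def polyhedron_def by blast
  next
    fix x assume "x \<in> {x. A *v x = t0 \<and> (\<forall>i. (C *v x) $ i \<le> d $ i)}"
    then have h: "A *v x = t0" "\<forall>i. (C *v x) $ i \<le> d $ i" by auto
    have "x \<in> X" using h(2) unfolding X_def polyhedron_def by simp
    moreover have "f x = f x0" unfolding f_def using h(1) unfolding t0_def by simp
    ultimately show "x \<in> S" using memS x0 by auto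
  qed
  have P1: "\<exists>!t. \<forall>xs\<in>S. A *v xs = t" using allt0 uniq by blast
  have P2: "\<forall>t. (\<forall>xs\<in>S. A *v xs = t) \<longrightarrow> S = {x. A *v x = t \<and> (\<forall>i. (C *v x) $ i \<le> d $ i)}"
    using uniq Seq by blast
  define Gf where "Gf = (\<lambda>x. G (A *v x) v* A)"
  have D: "(f has_derivative (\<lambda>h. Gf x \<bullet> h)) (at x)" for x
  proof -
    have "(f has_derivative (\<lambda>h. G (A *v x) \<bullet> (A *v h))) (at x)"
      unfolding f_def
      using has_derivative_compose[OF bounded_linear_imp_has_derivative[OF matrix_vector_mul_bounded_linear[of A]] grad_g[of "A *v x"]]
      by (simp add: o_def)
    then show ?thesis by (simp add: Gf_def dot_lmul_matrix)
  qed
  let ?K = "onorm (\<lambda>v. A *v v)"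
  have K0: "?K \<ge> 0" by (rule onorm_pos_le) simp
  have Lg0: "Lg \<ge> 0"
  proof -
    define z :: "real^'m" where "z = 1"
    have "z \<noteq> 0" by (simp add: z_def vec_eq_iff)
    have "0 \<le> Lg * norm (z - 0)" using lip[of z 0] norm_ge_zero order_trans by blast
    then show ?thesis using \<open>z \<noteq> 0\<close> by (simp add: zero_le_mult_iff)
  qed
  have Lip: "norm (Gf x - Gf y) \<le> Lg * ?K\<^sup>2 * norm (x - y)" for x y
  proof -
    have "Gf x - Gf y = (G (A *v x) - G (A *v y)) v* A"
      by (simp add: Gf_def vector_matrix_mult_diff_distrib)
    then have "norm (Gf x - Gf y) \<le> ?K * norm (G (A *v x) - G (A *v y))"
      using vmul_bound by simp
    also have "\<dots> \<le> ?K * (Lg * norm (A *v x - A *v y))"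
      by (rule mult_left_mono[OF lip K0])
    also have "\<dots> \<le> ?K * (Lg * (?K * norm (x - y)))"
      using onorm[OF matrix_vector_mul_bounded_linear[of A], of "x - y"] K0 Lg0
      by (simp add: matrix_vector_mult_diff_distrib mult_left_mono)
    finally show ?thesis by (simp add: power2_eq_square algebra_simps)
  qed
  have Sclosed: "closed S"
  proof -
    have "S = (\<lambda>x. A *v x) -` {t0} \<inter> (\<Inter>i. {x. (C *v x) $ i \<le> d $ i})" using Seq by auto
    moreover have "closed ((\<lambda>x. A *v x) -` {t0})"
      by (intro closed_vimage closed_singleton linear_continuous_on matrix_vector_mul_bounded_linear)
    moreover have "closed {x. (C *v x) $ i \<le> d $ i}" for i
      by (intro closed_Collect_le continuous_intros)
    ultimately show ?thesis by auto
  qed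
  have P3: "\<forall>t \<theta>. (\<forall>xs\<in>S. A *v xs = t) \<longrightarrow> \<theta> > 0 \<longrightarrow>
                (\<forall>x. norm (x - closest_point S x) \<le> \<theta> * stack_norm (A *v x - t) (pos_part_vec (C *v x - d))) \<longrightarrow>
                (\<forall>x\<in>X. let xb = closest_point S x in
                   Inf (f ` X) \<ge> f x + Gf x \<bullet> (xb - x) + \<sigma>g / (2 * \<theta>\<^sup>2) * (norm (x - xb))\<^sup>2)"
  proof (intro allI impI ballI)
    fix t \<theta> x
    assume ht: "\<forall>xs\<in>S. A *v xs = t" and th: "\<theta> > 0"
      and hof: "\<forall>x. norm (x - closest_point S x) \<le> \<theta> * stack_norm (A *v x - t) (pos_part_vec (C *v x - d))"
      and xX: "x \<in> X"
    define xb where "xb = closest_point S x"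
    have xbS: "xb \<in> S" unfolding xb_def by (rule closest_point_in_set[OF Sclosed Sne])
    have Axb: "A *v xb = t" using ht xbS by auto
    have Inf: "Inf (f ` X) = f xb"
      using xbS memS by (intro cInf_eq_minimum) auto
    have pp: "pos_part_vec (C *v x - d) = 0"
      using xX by (simp add: pos_part_vec_def X_def polyhedron_def vec_eq_iff)
    have h1: "norm (x - xb) \<le> \<theta> * norm (A *v x - t)"
      using hof[rule_format, of x] by (simp add: pp stack_norm_def xb_def)
    have h2: "(norm (x - xb))\<^sup>2 \<le> \<theta>\<^sup>2 * (norm (A *v x - t))\<^sup>2"
      using power_mono[OF h1 norm_ge_zero, of 2] by (simp add: power_mult_distrib)
    have h3: "\<sigma>g / (2 * \<theta>\<^sup>2) * (norm (x - xb))\<^sup>2 \<le> \<sigma>g / 2 * (norm (A *v x - t))\<^sup>2"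
    proof -
      have "\<sigma>g / (2 * \<theta>\<^sup>2) * (norm (x - xb))\<^sup>2 \<le> \<sigma>g / (2 * \<theta>\<^sup>2) * (\<theta>\<^sup>2 * (norm (A *v x - t))\<^sup>2)"
        using h2 sigma_pos th by (intro mult_left_mono) auto
      also have "\<dots> = \<sigma>g / 2 * (norm (A *v x - t))\<^sup>2" using th by (simp add: field_simps)
      finally show ?thesis .
    qed
    have sc: "g t \<ge> g (A *v x) + G (A *v x) \<bullet> (t - A *v x) + \<sigma>g / 2 * (norm (t - A *v x))\<^sup>2"
      by (rule strong)
    have gi: "Gf x \<bullet> (xb - x) = G (A *v x) \<bullet> (t - A *v x)"
      by (simp add: Gf_def dot_lmul_matrix matrix_vector_mult_diff_distrib Axb)
    have "norm (t - A *v x) = norm (A *v x - t)" by (rule norm_minus_commute)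
    then show "let xb = closest_point S x in
                   Inf (f ` X) \<ge> f x + Gf x \<bullet> (xb - x) + \<sigma>g / (2 * \<theta>\<^sup>2) * (norm (x - xb))\<^sup>2"
      using sc h3 gi Inf Axb unfolding Let_def xb_def[symmetric] f_def by simp
  qed
  have P4: "\<exists>Gf. (\<forall>x. (f has_derivative (\<lambda>h. Gf x \<bullet> h)) (at x))
           \<and> (\<forall>x y. norm (Gf x - Gf y) \<le> Lg * ?K\<^sup>2 * norm (x - y))
           \<and> (\<forall>t \<theta>. (\<forall>xs\<in>S. A *v xs = t) \<longrightarrow> \<theta> > 0 \<longrightarrow>
                (\<forall>x. norm (x - closest_point S x) \<le> \<theta> * stack_norm (A *v x - t) (pos_part_vec (C *v x - d))) \<longrightarrow>
                (\<forall>x\<in>X. let xb = closest_point S x in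
                   Inf (f ` X) \<ge> f x + Gf x \<bullet> (xb - x) + \<sigma>g / (2 * \<theta>\<^sup>2) * (norm (x - xb))\<^sup>2))"
    apply (rule exI[of _ Gf])
    apply (intro conjI)
    subgoal using D by blast
    subgoal using Lip by blast
    subgoal using P3 by assumption
    done
  note ALL = conjI[OF P1 conjI[OF P2 P4]]
  from ALL show ?thesis unfolding S_def X_def f_def .
qed

end
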